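(* For every graph $G$ and every $\tau\ge1$, $$|Q_{\mathrm{Del\text{-}N}}(G,3\tau)|\le3\cdot|Q_{\mathrm{LP\text{-}Del\text{-}N}}(G,\tau)|.$$
   Context: Graphs are finite, simple, undirected; $\deg(H)$ is the maximum degree; $E(v)$ is the set of edges at $v$. $H\subseteq G$ means $H$ is obtained from $G$ by deleting a set of nodes with all incident edges. $Q_{\mathrm{Del\text{-}N}}(G,t)=-\min\{|V(G)|-|V(G^* )|: G^*\subseteq G,\ \deg(G^* )\le t\}$. $Q_{\mathrm{LP\text{-}Del\text{-}N}}(G,\tau)$ is the optimal value of the LP: maximize $-\sum_{v\in V}x_v$ subject to $y_e\ge1-x_{v'}-x_{v''}$ for every edge $e=(v',v'')$, $\sum_{e\in E(v)}y_e\le\tau$ for every node $v$, and $x_v,y_e\in[0,1]$. *)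

theory Defs
  imports Complex_Main
begin

definition graph :: "'a set \<Rightarrow> 'a set set \<Rightarrow> bool" where
  "graph V E \<longleftrightarrow> finite V \<and> (\<forall>e\<in>E. e \<subseteq> V \<and> card e = 2)"

definition edges_at :: "'a set set \<Rightarrow> 'a \<Rightarrow> 'a set set" where
  "edges_at E v = {e \<in> E. v \<in> e}"

definition max_deg :: "'a set \<Rightarrow> 'a set set \<Rightarrow> nat" where
  "max_deg V E = Max ({card (edges_at E v) | v. v \<in> V} \<union> {0})"

definition induced_edges :: "'a set set \<Rightarrow> 'a set \<Rightarrow> 'a set set" where
  "induced_edges E S = {e \<in> E. e \<subseteq> S}"

definition Q_DelN :: "'a set \<Rightarrow> 'a set set \<Rightarrow> real \<Rightarrow> real" where
  "Q_DelN V E t = - real (Min {card V - card S | S. S \<subseteq> V \<and>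
       real (max_deg S (induced_edges E S)) \<le> t})"

definition lp_feasible ::
  "'a set \<Rightarrow> 'a set set \<Rightarrow> real \<Rightarrow> ('a \<Rightarrow> real) \<Rightarrow> ('a set \<Rightarrow> real) \<Rightarrow> bool" where
  "lp_feasible V E \<tau> x y \<longleftrightarrow>
     (\<forall>v\<in>V. 0 \<le> x v \<and> x v \<le> 1) \<and>
     (\<forall>e\<in>E. 0 \<le> y e \<and> y e \<le> 1) \<and>
     (\<forall>e\<in>E. \<forall>u w. e = {u, w} \<longrightarrow> y e \<ge> 1 - x u - x w) \<and>
     (\<forall>v\<in>V. (\<Sum>e\<in>edges_at E v. y e) \<le> \<tau>)"

text \<open>Optimal value of the LP (maximize the objective; the optimum is attained).\<close>
definition Q_LP_DelN :: "'a set \<Rightarrow> 'a set set \<Rightarrow> real \<Rightarrow> real" where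
  "Q_LP_DelN V E \<tau> = Sup {- (\<Sum>v\<in>V. x v) | x y. lp_feasible V E \<tau> x y}"

end

theory Submission
  imports Defs
begin

lemma round_bound:
  fixes V :: "'a set" and E :: "'a set set" and \<tau> :: real
  assumes g: "graph V E" and f: "lp_feasible V E \<tau> x y" and t0: "\<tau> \<ge> 0"
  shows "real (Min {card V - card S | S. S \<subseteq> V \<and>
       real (max_deg S (induced_edges E S)) \<le> 3 * \<tau>}) \<le> 3 * (\<Sum>v\<in>V. x v)"
proof -
  define K where "K = {v\<in>V. x v < 1/3}"
  have finV: "finite V" using g by (simp add: graph_def)
  have EV: "E \<subseteq> Pow V" using g by (auto simp: graph_def)
  have finE: "finite E" by (rule finite_subset[OF EV]) (simp add: finV)
  have x0: "\<forall>v\<in>V. 0 \<le> x v \<and> x v \<le> 1" and y0: "\<forall>e\<in>E. 0 \<le> y e \<and> y e \<le> 1"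
   and ye: "\<forall>e\<in>E. \<forall>u w. e = {u, w} \<longrightarrow> y e \<ge> 1 - x u - x w"
   and ys: "\<forall>v\<in>V. (\<Sum>e\<in>edges_at E v. y e) \<le> \<tau>"
    using f by (auto simp: lp_feasible_def)
  have KV: "K \<subseteq> V" by (auto simp: K_def)
  have finK: "finite K" using finV KV finite_subset by blast
  have deg: "real (card (edges_at (induced_edges E K) v)) \<le> 3 * \<tau>" if vK: "v \<in> K" for v
  proof -
    let ?A = "edges_at (induced_edges E K) v"
    have AB: "?A \<subseteq> edges_at E v" by (auto simp: edges_at_def induced_edges_def)
    have finB: "finite (edges_at E v)" using finE by (simp add: edges_at_def)
    have big: "y e > 1/3" if eA: "e \<in> ?A" for e
    proof -
      have eE: "e \<in> E" and eK: "e \<subseteq> K" using eA by (auto simp: edges_at_def induced_edges_def)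
      have "card e = 2" using g eE by (auto simp: graph_def)
      then obtain u w where e: "e = {u, w}" by (meson card_2_iff)
      have "u \<in> K" "w \<in> K" using eK e by auto
      hence "x u < 1/3" "x w < 1/3" by (auto simp: K_def)
      moreover have "y e \<ge> 1 - x u - x w" using ye eE e by blast
      ultimately show ?thesis by linarith
    qed
    have "real (card ?A) / 3 = (\<Sum>e\<in>?A. 1/3)" by simp
    also have "\<dots> \<le> (\<Sum>e\<in>?A. y e)" by (rule sum_mono) (use big in force)
    also have "\<dots> \<le> (\<Sum>e\<in>edges_at E v. y e)"
      by (rule sum_mono2[OF finB AB]) (use y0 in \<open>auto simp: edges_at_def\<close>)
    also have "\<dots> \<le> \<tau>" using ys vK KV by auto
    finally show ?thesis by simp
  qed
  have md: "real (max_deg K (induced_edges E K)) \<le> 3 * \<tau>"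
  proof -
    let ?M = "{card (edges_at (induced_edges E K) v) | v. v \<in> K} \<union> {0}"
    have "finite ?M" using finK by simp
    hence "Max ?M \<in> ?M" by (intro Max_in) auto
    moreover note t0
    ultimately show ?thesis using deg unfolding max_deg_def by auto
  qed
  let ?D = "{card V - card S | S. S \<subseteq> V \<and>
       real (max_deg S (induced_edges E S)) \<le> 3 * \<tau>}"
  have finD: "finite ?D"
  proof (rule finite_subset[of _ "{0..card V}"])
    show "?D \<subseteq> {0..card V}" by auto
  qed simp
  have "card V - card K \<in> ?D" using KV md by blast
  hence "Min ?D \<le> card V - card K" using finD by simp
  also have "card V - card K = card (V - K)" using finK KV by (simp add: card_Diff_subset)
  finally have "real (Min ?D) \<le> real (card (V - K))" by simp
  also have "real (card (V - K)) = (\<Sum>v\<in>V-K. 1)" by simp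
  also have "\<dots> \<le> (\<Sum>v\<in>V-K. 3 * x v)" by (rule sum_mono) (auto simp: K_def)
  also have "\<dots> \<le> (\<Sum>v\<in>V. 3 * x v)"
    by (rule sum_mono2) (use finV x0 in auto)
  also have "\<dots> = 3 * (\<Sum>v\<in>V. x v)" by (simp add: sum_distrib_left)
  finally show ?thesis .
qed


theorem mainTheorem7:
  fixes V :: "'a set" and E :: "'a set set" and \<tau> :: real
  assumes "graph V E" and "\<tau> \<ge> 1"
  shows "\<bar>Q_DelN V E (3 * \<tau>)\<bar> \<le> 3 * \<bar>Q_LP_DelN V E \<tau>\<bar>"
proof -
  let ?D = "{card V - card S | S. S \<subseteq> V \<and>
       real (max_deg S (induced_edges E S)) \<le> 3 * \<tau>}"
  let ?L = "{- (\<Sum>v\<in>V. x v) | x y. lp_feasible V E \<tau> x y}"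
  have feas: "lp_feasible V E \<tau> (\<lambda>_. 1) (\<lambda>_. 0)"
    using assms(2) by (auto simp: lp_feasible_def)
  hence ne: "?L \<noteq> {}" by blast
  have le0: "Sup ?L \<le> 0"
  proof (rule cSup_least[OF ne])
    fix a assume "a \<in> ?L"
    then obtain x y where a: "a = - (\<Sum>v\<in>V. x v)" and f: "lp_feasible V E \<tau> x y" by blast
    have "0 \<le> (\<Sum>v\<in>V. x v)" using f by (intro sum_nonneg) (auto simp: lp_feasible_def)
    thus "a \<le> 0" using a by simp
  qed
  have leD: "Sup ?L \<le> - real (Min ?D) / 3"
  proof (rule cSup_least[OF ne])
    fix a assume "a \<in> ?L"
    then obtain x y where a: "a = - (\<Sum>v\<in>V. x v)" and f: "lp_feasible V E \<tau> x y" by blast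
    have "real (Min ?D) \<le> 3 * (\<Sum>v\<in>V. x v)"
      by (rule round_bound[OF assms(1) f]) (use assms(2) in simp)
    thus "a \<le> - real (Min ?D) / 3" using a by simp
  qed
  have a1: "\<bar>Q_DelN V E (3 * \<tau>)\<bar> = real (Min ?D)" unfolding Q_DelN_def by (simp only: abs_minus_cancel abs_of_nat)
  have a2: "\<bar>Q_LP_DelN V E \<tau>\<bar> = - Sup ?L" unfolding Q_LP_DelN_def using le0 by (simp only: abs_of_nonpos)
  show ?thesis unfolding a1 a2 using leD by linarith
qed

end
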